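(* Let $S_0$ be the equivalence relation on $\mathcal M$ whose classes are the hyperplanes $\Sigma_t$, $t\in\mathbb R$; that is, $S_0((t,\vec x),(t',\vec x'))\iff t=t'$. Then: (a) $S_0$ is a non-trivial $\mathtt{IGal}$-invariant equivalence relation. It is the unique non-trivial $\mathtt{IGal}$-invariant equivalence relation $S$ on $\mathcal M$ such that every equivalence class of $S$ meets every Galilean worldline in at most one point. Here a Galilean worldline is the graph $\{(t,\vec x(t)):t\in I\}$ of a piecewise differentiable map $\vec x:I\to\mathbb R^3$ defined on an interval $I\subseteq\mathbb R$. (b) $S_0$ is also the unique non-trivial $\mathtt{IGal}$-invariant equivalence relation on $\mathcal M$ all of whose equivalence classes are connected subsets of $\mathbb R^4$.
   Context: Spacetime is $\mathcal M=\mathbb R^4$, with points written $(t,\vec x)$, $t\in\mathbb R$, $\vec x\in\mathbb R^3$. For $t\in\mathbb R$ let $\Sigma_t:=\{(t,\vec x):\vec x\in\mathbb R^3\}$. $\mathtt{IGal}$ is the group of bijections of $\mathbb R^4$ of the form $(t,\vec x)\mapsto(t+b,\;R\vec x+\vec v\,t+\vec a)$ with $R\in\mathtt{SO}(3)$, $\vec v,\vec a\in\mathbb R^3$ and $b\in\mathbb R$. An equivalence relation $S$ on $\mathcal M$ is $G$-invariant if $S(p,q)\Leftrightarrow S(g\cdot p,g\cdot q)$ for all $g\in G$ and all $p,q$. It is non-trivial if it is neither the one-class relation (single class $\mathcal M$) nor the equality relation (all classes singletons). *)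

theory Defs
  imports "HOL-Analysis.Analysis"
begin

type_synonym spt = "real \<times> (real^3)"

definition SO3 :: "(real^3^3) set" where
  "SO3 = {R. orthogonal_matrix R \<and> det R = 1}"

definition igal_map :: "real^3^3 \<Rightarrow> real^3 \<Rightarrow> real^3 \<Rightarrow> real \<Rightarrow> spt \<Rightarrow> spt" where
  "igal_map R v a b = (\<lambda>(t, x). (t + b, R *v x + t *\<^sub>R v + a))"

definition IGal :: "(spt \<Rightarrow> spt) set" where
  "IGal = {igal_map R v a b | R v a b. R \<in> SO3}"

definition invariant_under :: "('p \<Rightarrow> 'p) set \<Rightarrow> ('p \<Rightarrow> 'p \<Rightarrow> bool) \<Rightarrow> bool" where
  "invariant_under G S \<longleftrightarrow> (\<forall>g\<in>G. \<forall>p q. S p q \<longleftrightarrow> S (g p) (g q))"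

definition nontrivial_rel :: "('p \<Rightarrow> 'p \<Rightarrow> bool) \<Rightarrow> bool" where
  "nontrivial_rel S \<longleftrightarrow> \<not> (\<forall>p q. S p q) \<and> \<not> (\<forall>p q. S p q \<longleftrightarrow> p = q)"

definition eq_class :: "('p \<Rightarrow> 'p \<Rightarrow> bool) \<Rightarrow> 'p \<Rightarrow> 'p set" where
  "eq_class S p = {q. S p q}"

definition galilean_worldline :: "spt set \<Rightarrow> bool" where
  "galilean_worldline W \<longleftrightarrow>
     (\<exists>I (xf :: real \<Rightarrow> real^3). is_interval I \<and> xf piecewise_differentiable_on I \<and>
        W = {(t, xf t) | t. t \<in> I})"

definition S0 :: "spt \<Rightarrow> spt \<Rightarrow> bool" where
  "S0 p q \<longleftrightarrow> fst p = fst q"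

end

theory Submission
  imports Defs
begin

lemma scale_fill:
  fixes K :: "'a::real_normed_vector set"
  assumes add: "\<And>x y. x \<in> K \<Longrightarrow> y \<in> K \<Longrightarrow> x + y \<in> K" and z0: "0 \<in> K"
    and c: "c > 0" and B: "\<And>z. norm z \<le> c \<Longrightarrow> z \<in> K"
  shows "z \<in> K"
proof -
  have nm: "of_nat n *\<^sub>R y \<in> K" if "y \<in> K" for y n
  proof (induction n)
    case 0 then show ?case using z0 by simp
  next
    case (Suc n)
    have "of_nat (Suc n) *\<^sub>R y = of_nat n *\<^sub>R y + y" by (simp add: algebra_simps)
    then show ?case using add Suc that by simp
  qed
  define n where "n = nat \<lceil>norm z / c\<rceil> + 1"
  have npos: "real n > 0" unfolding n_def by simp
  have "norm z / c \<le> real n" unfolding n_def by linarith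
  then have "norm z \<le> c * real n" using c by (simp add: field_simps)
  then have "norm (z /\<^sub>R real n) \<le> c" using npos by (simp add: field_simps)
  then have "z /\<^sub>R real n \<in> K" by (rule B)
  from nm[OF this, of n] show ?thesis using npos by simp
qed

lemma sphere_in:
  fixes K :: "(real^3) set"
  assumes rot: "\<And>R x. R \<in> SO3 \<Longrightarrow> x \<in> K \<Longrightarrow> R *v x \<in> K"
    and x0: "x0 \<in> K" and nrm: "norm y = norm x0"
  shows "y \<in> K"
proof -
  have "2 \<le> CARD(3)" by simp
  then obtain f where f: "orthogonal_transformation f" "det(matrix f) = 1" "f x0 = y"
    using rotation_exists[of x0 y] nrm by metis
  have lin: "linear f" using f(1) orthogonal_transformation_matrix by blast
  have "matrix f \<in> SO3" using f(1,2) orthogonal_transformation_matrix unfolding SO3_def by blast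
  moreover have "matrix f *v x0 = y" using lin f(3) by (simp add: matrix_works linear_linear)
  ultimately show ?thesis using rot x0 by metis
qed

lemma core3:
  fixes K :: "(real^3) set"
  assumes add: "\<And>x y. x \<in> K \<Longrightarrow> y \<in> K \<Longrightarrow> x + y \<in> K" and z0: "0 \<in> K"
    and neg: "\<And>x. x \<in> K \<Longrightarrow> - x \<in> K"
    and rot: "\<And>R x. R \<in> SO3 \<Longrightarrow> x \<in> K \<Longrightarrow> R *v x \<in> K"
    and x0: "x0 \<in> K" and nz: "x0 \<noteq> 0"
  shows "z \<in> K"
proof (rule scale_fill[OF add z0])
  define r where "r = norm x0"
  show "r > 0" using nz r_def by simp
  fix z :: "real^3"
  assume zr: "norm z \<le> r"
  have "2 \<le> DIM(real^3)" by simp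
  then obtain h where h: "h \<noteq> 0" "orthogonal z h" using orthogonal_to_vector_exists by metis
  define s where "s = sqrt (r^2 - (norm z)^2/4)"
  define h' where "h' = (s / norm h) *\<^sub>R h"
  have zz: "(norm z)^2 \<le> r^2" using zr by (simp add: power_mono)
  have nn: "0 \<le> r^2 - (norm z)^2/4" using zz zero_le_power2[of "norm z"] by linarith
  have s0: "s \<ge> 0" unfolding s_def using nn by simp
  have nh': "norm h' = s" unfolding h'_def using h(1) s0 by simp
  have zh: "z \<bullet> h' = 0" using h(2) unfolding h'_def orthogonal_def by simp
  have hz: "h' \<bullet> z = 0" using zh by (simp add: inner_commute)
  have s2: "s^2 = r^2 - (norm z)^2/4"
    unfolding s_def using nn by simp
  have nu: "norm ((1/2) *\<^sub>R z + h') = r"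
  proof -
    have "(norm ((1/2) *\<^sub>R z + h'))^2 = (1/4) * (norm z)^2 + (norm h')^2"
      unfolding power2_norm_eq_inner by (simp add: inner_add_left inner_add_right zh hz)
    also have "\<dots> = r^2" using nh' s2 by simp
    finally show ?thesis using \<open>r > 0\<close> by (simp add: power2_eq_iff_nonneg)
  qed
  have nw: "norm ((1/2) *\<^sub>R z - h') = r"
  proof -
    have "(norm ((1/2) *\<^sub>R z - h'))^2 = (1/4) * (norm z)^2 + (norm h')^2"
      unfolding power2_norm_eq_inner by (simp add: inner_diff_left inner_diff_right zh hz)
    also have "\<dots> = r^2" using nh' s2 by simp
    finally show ?thesis using \<open>r > 0\<close> by (simp add: power2_eq_iff_nonneg)
  qed
  have "(1/2) *\<^sub>R z + h' \<in> K" using sphere_in[OF rot x0] nu r_def by blast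
  moreover have "(1/2) *\<^sub>R z - h' \<in> K" using sphere_in[OF rot x0] nw r_def by blast
  ultimately have "((1/2) *\<^sub>R z + h') + ((1/2) *\<^sub>R z - h') \<in> K" using add by blast
  moreover have "((1/2) *\<^sub>R z + h') + ((1/2) *\<^sub>R z - h') = z"
    by (simp add: algebra_simps flip: scaleR_add_left)
  ultimately show "z \<in> K" by simp
qed


lemma id_SO3: "mat 1 \<in> SO3"
  unfolding SO3_def by (simp add: orthogonal_matrix_id det_I)

lemma trans_IGal: "igal_map (mat 1) 0 (snd a) (fst a) \<in> IGal"
  unfolding IGal_def using id_SO3 by blast

lemma trans_app: "igal_map (mat 1) 0 (snd a) (fst a) p = p + a"
  unfolding igal_map_def by (cases p, cases a) simp

lemma boost_IGal: "igal_map (mat 1) v 0 0 \<in> IGal"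
  unfolding IGal_def using id_SO3 by blast

lemma boost_app: "igal_map (mat 1) v 0 0 (t, x) = (t, x + t *\<^sub>R v)"
  unfolding igal_map_def by simp

lemma rot_IGal: "R \<in> SO3 \<Longrightarrow> igal_map R 0 0 0 \<in> IGal"
  unfolding IGal_def by blast

lemma rot_app: "igal_map R 0 0 0 (t, x) = (t, R *v x)"
  unfolding igal_map_def by simp

locale invrel =
  fixes S :: "spt \<Rightarrow> spt \<Rightarrow> bool"
  assumes eqv: "equivp S" and inv: "invariant_under IGal S"
begin

lemma shift: "S p q \<longleftrightarrow> S (p + a) (q + a)"
  using inv trans_IGal[of a] trans_app unfolding invariant_under_def by metis

lemma rel0: "S p q \<longleftrightarrow> S 0 (q - p)"
  using shift[of p q "- p"] by simp

lemma kadd: "S 0 a \<Longrightarrow> S 0 b \<Longrightarrow> S 0 (a + b)"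
  using shift[of 0 b a] eqv by (metis add.commute add_0 equivp_transp)

lemma kneg: "S 0 a \<Longrightarrow> S 0 (- a)"
  using shift[of 0 a "- a"] eqv by (simp add: equivp_symp)

lemma krefl: "S 0 0"
  using eqv by (simp add: equivp_reflp)

lemma kboost: "S 0 (t, x) \<Longrightarrow> S 0 (t, x + t *\<^sub>R v)"
  using inv boost_IGal[of v] boost_app[of v] unfolding invariant_under_def
  by (metis boost_app add_0 scale_zero_left zero_prod_def)

lemma krot: "R \<in> SO3 \<Longrightarrow> S 0 (t, x) \<Longrightarrow> S 0 (t, R *v x)"
  using inv rot_IGal[of R] rot_app[of R] unfolding invariant_under_def
  by (metis matrix_vector_mult_0_right zero_prod_def)

lemma final:
  assumes nt: "nontrivial_rel S" and tm: "\<And>d. S 0 d \<Longrightarrow> fst d = 0"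
  shows "S = S0"
proof -
  obtain p q where pq: "S p q \<noteq> (p = q)" using nt unfolding nontrivial_rel_def by blast
  then have "S p q" "p \<noteq> q" using eqv by (auto simp: equivp_reflp)
  define d where "d = q - p"
  have kd: "S 0 d" using \<open>S p q\<close> rel0 d_def by simp
  have f0: "fst d = 0" using tm kd .
  have "d \<noteq> 0" using \<open>p \<noteq> q\<close> d_def by simp
  then have sn: "snd d \<noteq> 0" using f0 by (metis prod.collapse zero_prod_def)
  have kd': "S 0 (0, snd d)" using kd f0 by (metis prod.collapse)
  let ?K = "{x. S 0 (0, x)}"
  have all: "S 0 (0, y)" for y
  proof -
    have "y \<in> ?K"
    proof (rule core3[of ?K "snd d"])
      show "x + y \<in> ?K" if "x \<in> ?K" "y \<in> ?K" for x y
        using kadd[of "(0,x)" "(0,y)"] that by simp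
      show "0 \<in> ?K" using krefl by (simp add: zero_prod_def)
      show "- x \<in> ?K" if "x \<in> ?K" for x using kneg[of "(0,x)"] that by simp
      show "R *v x \<in> ?K" if "R \<in> SO3" "x \<in> ?K" for R x using krot that by simp
      show "snd d \<in> ?K" using kd' by simp
      show "snd d \<noteq> 0" by (rule sn)
    qed
    then show ?thesis by simp
  qed
  show ?thesis
  proof (intro ext)
    fix p q :: spt
    have "S p q \<longleftrightarrow> S 0 (q - p)" by (rule rel0)
    also have "\<dots> \<longleftrightarrow> fst (q - p) = 0"
      using tm all by (metis prod.collapse)
    also have "\<dots> \<longleftrightarrow> S0 p q" unfolding S0_def by auto
    finally show "S p q = S0 p q" .
  qed
qed


lemma kspat: "S 0 (t, x) \<Longrightarrow> t \<noteq> 0 \<Longrightarrow> S 0 (t, y)"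
proof -
  assume "S 0 (t, x)" "t \<noteq> 0"
  then have "S 0 (t, x + t *\<^sub>R ((1/t) *\<^sub>R (y - x)))" using kboost by blast
  then show ?thesis using \<open>t \<noteq> 0\<close> by simp
qed

lemma time_wl:
  assumes wl: "\<forall>p W. galilean_worldline W \<longrightarrow> (\<forall>q1\<in>eq_class S p \<inter> W. \<forall>q2\<in>eq_class S p \<inter> W. q1 = q2)"
  shows "S 0 d \<Longrightarrow> fst d = 0"
proof (rule ccontr)
  assume kd: "S 0 d" and t: "fst d \<noteq> 0"
  have k: "S 0 (fst d, 0)" using kspat[of "fst d" "snd d" 0] kd t by simp
  define W where "W = {(s, (\<lambda>_. 0::real^3) s) | s. s \<in> (UNIV::real set)}"
  have "galilean_worldline W" unfolding galilean_worldline_def W_def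
    by (intro exI[of _ UNIV] exI[of _ "\<lambda>_. 0"]) simp
  moreover have "(0,0) \<in> eq_class S 0 \<inter> W" using krefl unfolding eq_class_def W_def
    by (simp add: zero_prod_def)
  moreover have "(fst d, 0) \<in> eq_class S 0 \<inter> W" using k unfolding eq_class_def W_def by simp
  ultimately show False using wl t by blast
qed

lemma time_conn:
  assumes nt: "nontrivial_rel S" and conn: "\<forall>p. connected (eq_class S p)"
  shows "S 0 d \<Longrightarrow> fst d = 0"
proof (rule ccontr)
  assume kd: "S 0 d" and t0: "fst d \<noteq> 0"
  define t where "t = fst d"
  have tn: "t \<noteq> 0" using t0 t_def by simp
  have kt: "S 0 (t, y)" for y using kspat[of t "snd d" y] kd tn t_def by simp
  have ks: "S 0 (0, y)" for y
    using kadd[OF kt[of y] kneg[OF kt[of 0]]] by simp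
  have "connected (fst ` eq_class S 0)"
    using conn[rule_format, of 0] by (rule connected_continuous_image[rotated]) (intro continuous_intros)
  then have iv: "is_interval (fst ` eq_class S 0)" by (simp add: is_interval_connected_1)
  have m0: "0 \<in> fst ` eq_class S 0" using krefl unfolding eq_class_def
    by (metis fst_zero image_eqI mem_Collect_eq)
  have mt: "t \<in> fst ` eq_class S 0" using kt[of 0] unfolding eq_class_def
    by (metis fst_conv image_eqI mem_Collect_eq)
  have between: "S 0 (s, 0)" if "min 0 t \<le> s" "s \<le> max 0 t" for s
  proof -
    have "s \<in> fst ` eq_class S 0"
      using iv m0 mt that unfolding is_interval_1
      by (cases "0 \<le> t") (auto simp: min_def max_def)
    then obtain y where "S 0 (s, y)" unfolding eq_class_def by auto
    from kadd[OF this ks[of "- y"]] show ?thesis by simp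
  qed
  let ?T = "{s. S 0 (s, 0)}"
  have allt: "s \<in> ?T" for s
  proof (rule scale_fill[of ?T "\<bar>t\<bar>"])
    show "x + y \<in> ?T" if "x \<in> ?T" "y \<in> ?T" for x y
      using kadd[of "(x,0)" "(y,0)"] that by simp
    show "0 \<in> ?T" using krefl by (simp add: zero_prod_def)
    show "\<bar>t\<bar> > 0" using tn by simp
    fix z :: real assume "norm z \<le> \<bar>t\<bar>"
    then have "(min 0 t \<le> z \<and> z \<le> max 0 t) \<or> (min 0 t \<le> - z \<and> - z \<le> max 0 t)"
      by (auto simp: min_def max_def)
    then show "z \<in> ?T"
    proof
      assume "min 0 t \<le> - z \<and> - z \<le> max 0 t"
      then have "S 0 (- z, 0)" using between by blast
      from kneg[OF this] show ?thesis by simp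
    qed (use between in auto)
  qed
  have "S 0 e" for e
    using kadd[of "(fst e, 0)" "(0, snd e)"] allt ks by simp
  then have "S p q" for p q using rel0 by blast
  then show False using nt unfolding nontrivial_rel_def by blast
qed

end

theorem theorem3:
  shows "(equivp S0 \<and> nontrivial_rel S0 \<and> invariant_under IGal S0 \<and>
          (\<forall>p W. galilean_worldline W \<longrightarrow> (\<forall>q1\<in>eq_class S0 p \<inter> W. \<forall>q2\<in>eq_class S0 p \<inter> W. q1 = q2)) \<and>
          (\<forall>S :: spt \<Rightarrow> spt \<Rightarrow> bool. equivp S \<and> nontrivial_rel S \<and> invariant_under IGal S \<and>
             (\<forall>p W. galilean_worldline W \<longrightarrow> (\<forall>q1\<in>eq_class S p \<inter> W. \<forall>q2\<in>eq_class S p \<inter> W. q1 = q2))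
             \<longrightarrow> S = S0))
       \<and> ((\<forall>p. connected (eq_class S0 p)) \<and>
          (\<forall>S :: spt \<Rightarrow> spt \<Rightarrow> bool. equivp S \<and> nontrivial_rel S \<and> invariant_under IGal S \<and>
             (\<forall>p. connected (eq_class S p)) \<longrightarrow> S = S0))"
proof (intro conjI allI impI)
  show "equivp S0" unfolding S0_def by (intro equivpI reflpI sympI transpI) auto
  have a: "\<not> S0 (0, 0) (1, 0)" unfolding S0_def by simp
  have b: "S0 (0, 0) (0, axis 1 1)" "(0::real, 0::real^3) \<noteq> (0, axis 1 1)"
    unfolding S0_def by (auto simp: axis_eq_0_iff)
  show "nontrivial_rel S0" unfolding nontrivial_rel_def using a b by blast
  show "invariant_under IGal S0" unfolding invariant_under_def IGal_def S0_def igal_map_def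
    by (auto split: prod.splits)
  show "\<forall>q1\<in>eq_class S0 p \<inter> W. \<forall>q2\<in>eq_class S0 p \<inter> W. q1 = q2" if "galilean_worldline W" for p W
    using that unfolding galilean_worldline_def eq_class_def S0_def by auto
  show "connected (eq_class S0 p)" for p
  proof -
    have "eq_class S0 p = {fst p} \<times> UNIV" unfolding eq_class_def S0_def by auto
    then show ?thesis by (simp add: connected_Times connected_UNIV)
  qed
  fix S :: "spt \<Rightarrow> spt \<Rightarrow> bool"
  {
    assume h: "equivp S \<and> nontrivial_rel S \<and> invariant_under IGal S \<and>
             (\<forall>p W. galilean_worldline W \<longrightarrow> (\<forall>q1\<in>eq_class S p \<inter> W. \<forall>q2\<in>eq_class S p \<inter> W. q1 = q2))"
    then interpret invrel S by unfold_locales auto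
    show "S = S0" using h final time_wl by blast
  next
    assume h: "equivp S \<and> nontrivial_rel S \<and> invariant_under IGal S \<and> (\<forall>p. connected (eq_class S p))"
    then interpret invrel S by unfold_locales auto
    show "S = S0" using h final time_conn by blast
  }
qed

end
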